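(* Let $k>3$, $r>0$, $\Phi=(\varphi_p)_{p\ge1}$ a complete orthonormal system of $H^r(\mathbb T^2)$, and $F:H^r(\mathbb T^2)\to H^k(\mathbb T^2)$ a bounded linear operator. There is a constant $C>0$ not depending on $n$ such that for $\mathcal T\in\{(ij,ik),(ik,jk)\}$, $$\sup_{u\in\mathbb T^n}|c^{\mathcal T}_n(\Phi,F,u)|\le C\,S_n^{\mathcal T}\,\|F\|^2_{\mathcal L(H^r,H^k)}.$$
   Context: $\mathbb T=\mathbb R/2\pi\mathbb Z$; $H^s(\mathbb T^2)$ is the $L^2$-Sobolev space of order $s$. For $n\ge2$, $p_n\in(0,1]$, $\xi^{(n)}_{ij}\in\{0,1\}$, $\hat\xi_{ij}=\xi^{(n)}_{ij}/p_n-1$. For $u=(u_1,\dots,u_n)\in\mathbb T^n$: $c^{(ij,ik)}_n(\Phi,F,u)=\frac1{n^3}\sum_{i,j,k=1}^n\hat\xi_{ij}\hat\xi_{ik}\sum_{p\ge1}\partial_{\theta_1}F(\varphi_p)(u_i,u_j)\,\overline{\partial_{\theta_1}F(\varphi_p)(u_i,u_k)}$, $c^{(ik,jk)}_n(\Phi,F,u)=\frac1{n^3}\sum_{i,j,k}\hat\xi_{ik}\hat\xi_{jk}\sum_{p\ge1}\partial_{\theta_1}F(\varphi_p)(u_i,u_k)\,\overline{\partial_{\theta_1}F(\varphi_p)(u_j,u_k)}$. $S_n^{(ij,ik)}=\sup_{r,s,t\in\{\pm1\}^n}|\frac1{n^3}\sum_{i,j,k}\hat\xi_{ij}\hat\xi_{ik}r_is_jt_k|$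 and $S_n^{(ik,jk)}=\sup_{r,s,t\in\{\pm1\}^n}|\frac1{n^3}\sum_{i,j,k}\hat\xi_{ik}\hat\xi_{jk}r_is_jt_k|$. *)

theory Defs
  imports "HOL-Analysis.Analysis"
begin

text \<open>Elements of the Sobolev space H^s(T^2) of complex-valued functions on the
  2-torus are represented by their Fourier coefficients
  f(theta) = sum over m in Z^2 of c_m exp(i m.theta), with the standard norm
  sum over m of (1 + |m|^2)^s |c_m|^2.\<close>

type_synonym fourier2 = "int \<times> int \<Rightarrow> complex"

definition sob_weight :: "real \<Rightarrow> int \<times> int \<Rightarrow> real" where
  "sob_weight s m = (1 + (real_of_int (fst m))\<^sup>2 + (real_of_int (snd m))\<^sup>2) powr s"

definition in_H :: "real \<Rightarrow> fourier2 \<Rightarrow> bool" where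
  "in_H s f \<longleftrightarrow> (\<lambda>m. sob_weight s m * (cmod (f m))\<^sup>2) summable_on UNIV"

definition H_inner :: "real \<Rightarrow> fourier2 \<Rightarrow> fourier2 \<Rightarrow> complex" where
  "H_inner s f g = (\<Sum>\<^sub>\<infinity>m. complex_of_real (sob_weight s m) * f m * cnj (g m))"

definition H_norm :: "real \<Rightarrow> fourier2 \<Rightarrow> real" where
  "H_norm s f = sqrt (\<Sum>\<^sub>\<infinity>m. sob_weight s m * (cmod (f m))\<^sup>2)"

definition complete_orthonormal_system :: "real \<Rightarrow> (nat \<Rightarrow> fourier2) \<Rightarrow> bool" where
  "complete_orthonormal_system r \<Phi> \<longleftrightarrow>
     (\<forall>p\<ge>1. in_H r (\<Phi> p)) \<and>
     (\<forall>p\<ge>1. \<forall>q\<ge>1. H_inner r (\<Phi> p) (\<Phi> q) = (if p = q then 1 else 0)) \<and>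
     (\<forall>f. in_H r f \<and> (\<forall>p\<ge>1. H_inner r f (\<Phi> p) = 0) \<longrightarrow> f = (\<lambda>_. 0))"

definition bounded_linear_op :: "real \<Rightarrow> real \<Rightarrow> (fourier2 \<Rightarrow> fourier2) \<Rightarrow> bool" where
  "bounded_linear_op r k F \<longleftrightarrow>
     (\<forall>f. in_H r f \<longrightarrow> in_H k (F f)) \<and>
     (\<forall>f g. in_H r f \<and> in_H r g \<longrightarrow> F (\<lambda>m. f m + g m) = (\<lambda>m. F f m + F g m)) \<and>
     (\<forall>c f. in_H r f \<longrightarrow> F (\<lambda>m. c * f m) = (\<lambda>m. c * F f m)) \<and>
     (\<exists>B. \<forall>f. in_H r f \<longrightarrow> H_norm k (F f) \<le> B * H_norm r f)"

definition op_norm :: "real \<Rightarrow> real \<Rightarrow> (fourier2 \<Rightarrow> fourier2) \<Rightarrow> real" where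
  "op_norm r k F = Sup {H_norm k (F f) | f. in_H r f \<and> H_norm r f \<le> 1}"

definition dtheta1 :: "fourier2 \<Rightarrow> real \<Rightarrow> real \<Rightarrow> complex" where
  "dtheta1 f x y = (\<Sum>\<^sub>\<infinity>m. (\<i> * of_int (fst m)) * f m *
       exp (\<i> * complex_of_real (real_of_int (fst m) * x + real_of_int (snd m) * y)))"

definition xihat :: "real \<Rightarrow> (nat \<Rightarrow> nat \<Rightarrow> real) \<Rightarrow> nat \<Rightarrow> nat \<Rightarrow> real" where
  "xihat pn \<xi> i j = \<xi> i j / pn - 1"

definition kern :: "(nat \<Rightarrow> fourier2) \<Rightarrow> (fourier2 \<Rightarrow> fourier2) \<Rightarrow> real \<Rightarrow> real \<Rightarrow> real \<Rightarrow> real \<Rightarrow> complex" where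
  "kern \<Phi> F a b c d = (\<Sum>\<^sub>\<infinity>p\<in>{1..}. dtheta1 (F (\<Phi> p)) a b * cnj (dtheta1 (F (\<Phi> p)) c d))"

text \<open>Indices i, j, k range over {0..<n} (instead of {1..n}).\<close>
definition c_ij_ik :: "nat \<Rightarrow> real \<Rightarrow> (nat \<Rightarrow> nat \<Rightarrow> real) \<Rightarrow> (nat \<Rightarrow> fourier2) \<Rightarrow> (fourier2 \<Rightarrow> fourier2) \<Rightarrow> (nat \<Rightarrow> real) \<Rightarrow> complex" where
  "c_ij_ik n pn \<xi> \<Phi> F u = (1 / of_nat n ^ 3) *
     (\<Sum>i<n. \<Sum>j<n. \<Sum>k<n. complex_of_real (xihat pn \<xi> i j * xihat pn \<xi> i k) *
        kern \<Phi> F (u i) (u j) (u i) (u k))"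

definition c_ik_jk :: "nat \<Rightarrow> real \<Rightarrow> (nat \<Rightarrow> nat \<Rightarrow> real) \<Rightarrow> (nat \<Rightarrow> fourier2) \<Rightarrow> (fourier2 \<Rightarrow> fourier2) \<Rightarrow> (nat \<Rightarrow> real) \<Rightarrow> complex" where
  "c_ik_jk n pn \<xi> \<Phi> F u = (1 / of_nat n ^ 3) *
     (\<Sum>i<n. \<Sum>j<n. \<Sum>k<n. complex_of_real (xihat pn \<xi> i k * xihat pn \<xi> j k) *
        kern \<Phi> F (u i) (u k) (u j) (u k))"

definition signs :: "nat \<Rightarrow> (nat \<Rightarrow> real) set" where
  "signs n = {r. \<forall>i. r i \<in> {-1, 1} \<and> (i \<ge> n \<longrightarrow> r i = 1)}"

definition S_ij_ik :: "nat \<Rightarrow> real \<Rightarrow> (nat \<Rightarrow> nat \<Rightarrow> real) \<Rightarrow> real" where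
  "S_ij_ik n pn \<xi> = Sup {\<bar>(1 / real n ^ 3) *
      (\<Sum>i<n. \<Sum>j<n. \<Sum>k<n. xihat pn \<xi> i j * xihat pn \<xi> i k * r i * s j * t k)\<bar>
      | r s t. r \<in> signs n \<and> s \<in> signs n \<and> t \<in> signs n}"

definition S_ik_jk :: "nat \<Rightarrow> real \<Rightarrow> (nat \<Rightarrow> nat \<Rightarrow> real) \<Rightarrow> real" where
  "S_ik_jk n pn \<xi> = Sup {\<bar>(1 / real n ^ 3) *
      (\<Sum>i<n. \<Sum>j<n. \<Sum>k<n. xihat pn \<xi> i k * xihat pn \<xi> j k * r i * s j * t k)\<bar>
      | r s t. r \<in> signs n \<and> s \<in> signs n \<and> t \<in> signs n}"

end

theory Submission
  imports Defs
begin


definition sgv :: "nat \<Rightarrow> (nat \<Rightarrow> real) \<Rightarrow> nat \<Rightarrow> real" where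
  "sgv n A i = (if i < n \<and> A i < 0 then -1 else 1)"

lemma sgv_signs: "sgv n A \<in> signs n"
  by (auto simp: signs_def sgv_def)

lemma sgv_bound:
  assumes "\<forall>i<n. \<bar>x i\<bar> \<le> 1"
  shows "(\<Sum>i<n. x i * A i) \<le> (\<Sum>i<n. sgv n A i * A i)"
proof (rule sum_mono)
  fix i assume "i \<in> {..<n}"
  hence i: "i < n" and "\<bar>x i\<bar> \<le> 1" using assms by auto
  hence xi: "x i \<le> 1" "-1 \<le> x i" by auto
  show "x i * A i \<le> sgv n A i * A i"
  proof (cases "A i < 0")
    case True
    have "(-1) * A i \<ge> x i * A i" using mult_right_mono_neg[OF xi(2)] True by simp
    thus ?thesis using True i by (simp add: sgv_def)
  next
    case False
    have "x i * A i \<le> 1 * A i" using mult_right_mono[OF xi(1)] False by simp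
    thus ?thesis using False by (simp add: sgv_def)
  qed
qed

lemma signs_abs: "r \<in> signs n \<Longrightarrow> \<bar>r i\<bar> \<le> 1"
  by (auto simp: signs_def) (metis abs_1 abs_minus_cancel order_refl)

lemma trilin_sign:
  fixes a :: "nat \<Rightarrow> nat \<Rightarrow> nat \<Rightarrow> real"
  assumes x: "\<forall>i<n. \<bar>x i\<bar> \<le> 1" and y: "\<forall>i<n. \<bar>y i\<bar> \<le> 1" and z: "\<forall>i<n. \<bar>z i\<bar> \<le> 1"
  shows "\<exists>r s t. r \<in> signs n \<and> s \<in> signs n \<and> t \<in> signs n \<and>
     \<bar>\<Sum>i<n. \<Sum>j<n. \<Sum>k<n. a i j k * x i * y j * z k\<bar> \<le>
     \<bar>\<Sum>i<n. \<Sum>j<n. \<Sum>k<n. a i j k * r i * s j * t k\<bar>"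
proof -
  define T where "T = (\<lambda>x y z. \<Sum>i<n. \<Sum>j<n. \<Sum>k<n. a i j k * x i * y j * z k)"
  obtain \<sigma> :: real where sg: "\<sigma> \<in> {-1,1}" "\<bar>T x y z\<bar> = \<sigma> * T x y z"
    by (cases "T x y z \<ge> 0") (auto intro: that[of 1] that[of "-1"])
  define x' where "x' = (\<lambda>i. \<sigma> * x i)"
  have x': "\<forall>i<n. \<bar>x' i\<bar> \<le> 1" using x sg(1) by (auto simp: x'_def abs_mult)
  have e1: "T x' y z = \<sigma> * T x y z"
    by (simp add: T_def x'_def sum_distrib_left algebra_simps)
  have TA: "T u v w = (\<Sum>i<n. u i * (\<Sum>j<n. \<Sum>k<n. a i j k * v j * w k))" for u v w
    by (simp add: T_def sum_distrib_left algebra_simps)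
  have TB: "T u v w = (\<Sum>j<n. v j * (\<Sum>i<n. \<Sum>k<n. a i j k * u i * w k))" for u v w
    unfolding T_def sum_distrib_left
    by (subst sum.swap) (simp add: algebra_simps)
  have TC: "T u v w = (\<Sum>k<n. w k * (\<Sum>i<n. \<Sum>j<n. a i j k * u i * v j))" for u v w
  proof -
    have "T u v w = (\<Sum>i<n. \<Sum>k<n. \<Sum>j<n. a i j k * u i * v j * w k)"
      unfolding T_def by (rule sum.cong[OF refl]) (rule sum.swap)
    also have "\<dots> = (\<Sum>k<n. \<Sum>i<n. \<Sum>j<n. a i j k * u i * v j * w k)"
      by (rule sum.swap)
    finally show ?thesis by (simp add: sum_distrib_left algebra_simps)
  qed
  define r where "r = sgv n (\<lambda>i. \<Sum>j<n. \<Sum>k<n. a i j k * y j * z k)"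
  define s where "s = sgv n (\<lambda>j. \<Sum>i<n. \<Sum>k<n. a i j k * r i * z k)"
  define t where "t = sgv n (\<lambda>k. \<Sum>i<n. \<Sum>j<n. a i j k * r i * s j)"
  have "\<bar>T x y z\<bar> = T x' y z" using sg e1 by simp
  also have "\<dots> \<le> T r y z" unfolding TA r_def by (rule sgv_bound[OF x'])
  also have "\<dots> \<le> T r s z" unfolding TB s_def by (rule sgv_bound[OF y])
  also have "\<dots> \<le> T r s t" unfolding TC t_def by (rule sgv_bound[OF z])
  also have "\<dots> \<le> \<bar>T r s t\<bar>" by simp
  finally show ?thesis unfolding T_def using sgv_signs r_def s_def t_def by blast
qed



lemma complex_base:
  fixes a :: "nat \<Rightarrow> nat \<Rightarrow> nat \<Rightarrow> real" and A B C :: "nat \<Rightarrow> complex"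
  assumes A: "\<forall>i<n. cmod (A i) \<le> 1" and B: "\<forall>i<n. cmod (B i) \<le> 1" and C: "\<forall>i<n. cmod (C i) \<le> 1"
  assumes H: "\<And>x y z. \<forall>i<n. \<bar>x i\<bar> \<le> 1 \<Longrightarrow> \<forall>i<n. \<bar>y i\<bar> \<le> 1 \<Longrightarrow> \<forall>i<n. \<bar>z i\<bar> \<le> 1 \<Longrightarrow>
     \<bar>\<Sum>i<n. \<Sum>j<n. \<Sum>k<n. a i j k * x i * y j * z k\<bar> \<le> M"
  shows "cmod (\<Sum>i<n. \<Sum>j<n. \<Sum>k<n. complex_of_real (a i j k) * A i * B j * C k) \<le> 8 * M"
proof -
  define T where "T = (\<lambda>x y z. \<Sum>i<n. \<Sum>j<n. \<Sum>k<n. a i j k * x i * y j * z k)"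
  have b: "\<forall>i<n. \<bar>f (X i)\<bar> \<le> 1" if "f = Re \<or> f = Im" "\<forall>i<n. cmod (X i) \<le> 1" for f X
    using that abs_Re_le_cmod abs_Im_le_cmod order_trans by metis
  have HT: "\<bar>T (\<lambda>i. f (A i)) (\<lambda>i. g (B i)) (\<lambda>i. h (C i))\<bar> \<le> M"
    if "f = Re \<or> f = Im" "g = Re \<or> g = Im" "h = Re \<or> h = Im" for f g h
    unfolding T_def by (rule H) (use that b[of f A] b[of g B] b[of h C] A B C in auto)
  let ?Z = "\<Sum>i<n. \<Sum>j<n. \<Sum>k<n. complex_of_real (a i j k) * A i * B j * C k"
  have Re: "Re ?Z = T (\<lambda>i. Re (A i)) (\<lambda>i. Re (B i)) (\<lambda>i. Re (C i)) - T (\<lambda>i. Re (A i)) (\<lambda>i. Im (B i)) (\<lambda>i. Im (C i))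
     - T (\<lambda>i. Im (A i)) (\<lambda>i. Re (B i)) (\<lambda>i. Im (C i)) - T (\<lambda>i. Im (A i)) (\<lambda>i. Im (B i)) (\<lambda>i. Re (C i))"
    unfolding T_def by (simp add: sum_subtractf[symmetric] algebra_simps)
  have Im: "Im ?Z = T (\<lambda>i. Im (A i)) (\<lambda>i. Re (B i)) (\<lambda>i. Re (C i)) + T (\<lambda>i. Re (A i)) (\<lambda>i. Im (B i)) (\<lambda>i. Re (C i))
     + T (\<lambda>i. Re (A i)) (\<lambda>i. Re (B i)) (\<lambda>i. Im (C i)) - T (\<lambda>i. Im (A i)) (\<lambda>i. Im (B i)) (\<lambda>i. Im (C i))"
    unfolding T_def by (simp add: sum_subtractf[symmetric] sum.distrib[symmetric] algebra_simps)
  have "cmod ?Z \<le> \<bar>Re ?Z\<bar> + \<bar>Im ?Z\<bar>" by (rule cmod_le)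
  also have "\<dots> \<le> 8 * M"
    unfolding Re Im using HT[of Re Re Re, simplified] HT[of Re Im Im, simplified] HT[of Im Re Im, simplified] HT[of Im Im Re, simplified]
      HT[of Im Re Re, simplified] HT[of Re Im Re, simplified] HT[of Re Re Im, simplified] HT[of Im Im Im, simplified] by linarith
  finally show ?thesis .
qed



lemma infsum_finite_sum:
  fixes f :: "'x \<Rightarrow> 'a \<Rightarrow> 'b::banach"
  assumes "finite I" "\<And>x. x \<in> I \<Longrightarrow> f x summable_on A"
  shows "(\<lambda>m. \<Sum>x\<in>I. f x m) summable_on A \<and> infsum (\<lambda>m. \<Sum>x\<in>I. f x m) A = (\<Sum>x\<in>I. infsum (f x) A)"
  using assms
proof (induction I rule: finite_induct)
  case empty thus ?case by simp
next
  case (insert y I)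
  have s1: "f y summable_on A" using insert by auto
  have s2: "(\<lambda>m. \<Sum>x\<in>I. f x m) summable_on A" and e2: "infsum (\<lambda>m. \<Sum>x\<in>I. f x m) A = (\<Sum>x\<in>I. infsum (f x) A)"
    using insert by auto
  show ?case using insert(1,2) summable_on_add[OF s1 s2] infsum_add[OF s1 s2] e2 by simp
qed

lemma abs_summ_bounded:
  fixes \<beta> V :: "'a \<Rightarrow> complex"
  assumes "(\<lambda>m. norm (\<beta> m)) summable_on A" "\<And>m. norm (V m) \<le> 1"
  shows "(\<lambda>m. \<beta> m * V m) summable_on A" "(\<lambda>m. norm (\<beta> m * V m)) summable_on A"
proof -
  show n: "(\<lambda>m. norm (\<beta> m * V m)) summable_on A"
    by (rule summable_on_comparison_test[OF assms(1)])
       (auto simp: norm_mult intro: mult_left_le[OF assms(2)])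
  thus "(\<lambda>m. \<beta> m * V m) summable_on A" by (rule abs_summable_summable)
qed

lemma fin_infsum_bound:
  fixes \<beta> :: "'a \<Rightarrow> complex" and V :: "'x \<Rightarrow> 'a \<Rightarrow> complex" and c :: "'x \<Rightarrow> complex"
  assumes I: "finite I" and \<beta>: "(\<lambda>m. norm (\<beta> m)) summable_on UNIV"
    and V: "\<And>x m. norm (V x m) \<le> 1"
    and M: "\<And>m. norm (\<Sum>x\<in>I. c x * V x m) \<le> M"
  shows "norm (\<Sum>x\<in>I. c x * (\<Sum>\<^sub>\<infinity>m. \<beta> m * V x m)) \<le> M * (\<Sum>\<^sub>\<infinity>m. norm (\<beta> m))"
proof -
  have s: "(\<lambda>m. c x * (\<beta> m * V x m)) summable_on UNIV" for x
    by (rule summable_on_cmult_right, rule abs_summ_bounded[OF \<beta> V])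
  have "(\<Sum>x\<in>I. c x * (\<Sum>\<^sub>\<infinity>m. \<beta> m * V x m)) = (\<Sum>x\<in>I. \<Sum>\<^sub>\<infinity>m. c x * (\<beta> m * V x m))"
    by (simp add: infsum_cmult_right')
  also have "\<dots> = (\<Sum>\<^sub>\<infinity>m. \<Sum>x\<in>I. c x * (\<beta> m * V x m))"
    using infsum_finite_sum[OF I, of "\<lambda>x m. c x * (\<beta> m * V x m)" UNIV] s by simp
  also have "\<dots> = (\<Sum>\<^sub>\<infinity>m. \<beta> m * (\<Sum>x\<in>I. c x * V x m))"
    by (simp add: sum_distrib_left algebra_simps)
  finally have eq: "(\<Sum>x\<in>I. c x * (\<Sum>\<^sub>\<infinity>m. \<beta> m * V x m)) = (\<Sum>\<^sub>\<infinity>m. \<beta> m * (\<Sum>x\<in>I. c x * V x m))" .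
  have M0: "0 \<le> M" using M[of undefined] norm_ge_zero order_trans by blast
  have ns: "(\<lambda>m. norm (\<beta> m) * M) summable_on UNIV" by (rule summable_on_cmult_left[OF \<beta>])
  have ab: "(\<lambda>m. norm (\<beta> m * (\<Sum>x\<in>I. c x * V x m))) summable_on UNIV"
    by (rule summable_on_comparison_test[OF ns]) (auto simp: norm_mult intro: mult_left_mono M)
  have "norm (\<Sum>\<^sub>\<infinity>m. \<beta> m * (\<Sum>x\<in>I. c x * V x m)) \<le> (\<Sum>\<^sub>\<infinity>m. norm (\<beta> m * (\<Sum>x\<in>I. c x * V x m)))"
    by (rule norm_infsum_bound[OF ab])
  also have "\<dots> \<le> (\<Sum>\<^sub>\<infinity>m. norm (\<beta> m) * M)"
    by (rule infsum_mono[OF ab ns]) (auto simp: norm_mult intro: mult_left_mono M)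
  also have "\<dots> = M * (\<Sum>\<^sub>\<infinity>m. norm (\<beta> m))" by (simp add: infsum_cmult_right' mult.commute)
  finally show ?thesis using eq by simp
qed

lemma main_gen:
  fixes \<beta> :: "'a \<Rightarrow> complex" and V W :: "'x \<Rightarrow> 'a \<Rightarrow> complex" and c :: "'x \<Rightarrow> complex"
  assumes I: "finite I" and \<beta>: "(\<lambda>m. norm (\<beta> m)) summable_on UNIV"
    and V: "\<And>x m. norm (V x m) \<le> 1" and W: "\<And>x m. norm (W x m) \<le> 1"
    and M: "\<And>m m'. norm (\<Sum>x\<in>I. c x * V x m * cnj (W x m')) \<le> M"
  shows "norm (\<Sum>x\<in>I. c x * (\<Sum>\<^sub>\<infinity>m. \<beta> m * V x m) * cnj (\<Sum>\<^sub>\<infinity>m. \<beta> m * W x m))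
     \<le> M * (\<Sum>\<^sub>\<infinity>m. norm (\<beta> m))^2"
proof -
  let ?N = "\<Sum>\<^sub>\<infinity>m. norm (\<beta> m)"
  have \<beta>': "(\<lambda>m. norm (cnj (\<beta> m))) summable_on UNIV" using \<beta> by simp
  have inner: "norm (\<Sum>x\<in>I. (c x * V x m) * (\<Sum>\<^sub>\<infinity>m'. cnj (\<beta> m') * cnj (W x m'))) \<le> M * ?N" for m
    using fin_infsum_bound[OF I \<beta>', of "\<lambda>x m'. cnj (W x m')" "\<lambda>x. c x * V x m" M] W M
    by (simp add: mult.assoc)
  have "norm (\<Sum>x\<in>I. (c x * cnj (\<Sum>\<^sub>\<infinity>m. \<beta> m * W x m)) * (\<Sum>\<^sub>\<infinity>m. \<beta> m * V x m)) \<le> (M * ?N) * ?N"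
  proof (rule fin_infsum_bound[OF I \<beta> V])
    fix m
    have "(\<Sum>x\<in>I. c x * cnj (\<Sum>\<^sub>\<infinity>m. \<beta> m * W x m) * V x m) =
          (\<Sum>x\<in>I. (c x * V x m) * (\<Sum>\<^sub>\<infinity>m'. cnj (\<beta> m') * cnj (W x m')))"
      by (simp flip: infsum_cnj add: algebra_simps)
    thus "norm (\<Sum>x\<in>I. c x * cnj (\<Sum>\<^sub>\<infinity>m. \<beta> m * W x m) * V x m) \<le> M * ?N" using inner by simp
  qed
  thus ?thesis by (simp add: algebra_simps power2_eq_square)
qed



lemma sob_weight_nonneg: "0 \<le> sob_weight s m"
  by (simp add: sob_weight_def)

lemma sob_weight_pos: "0 < sob_weight s m"
  unfolding sob_weight_def by (intro powr_gt_zero[THEN iffD2]) (smt (verit) zero_le_power2)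

lemma in_H_zero: "in_H s (\<lambda>_. 0)"
  by (simp add: in_H_def)

lemma in_H_scale: "in_H s f \<Longrightarrow> in_H s (\<lambda>m. c * f m)"
  unfolding in_H_def norm_mult power_mult_distrib
  using summable_on_cmult_right[of "\<lambda>m. sob_weight s m * (cmod (f m))\<^sup>2" UNIV "(cmod c)^2"]
  by (simp add: algebra_simps)

lemma sq2: "(a + b)\<^sup>2 \<le> 2 * a\<^sup>2 + 2 * (b::real)\<^sup>2"
proof -
  have "0 \<le> (a - b)\<^sup>2" by simp
  thus ?thesis by (simp add: power2_eq_square algebra_simps)
qed

lemma sq1: "0 \<le> a \<Longrightarrow> 0 \<le> b \<Longrightarrow> a * b \<le> a\<^sup>2 + (b::real)\<^sup>2"
proof -
  assume "0 \<le> a" "0 \<le> b"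
  hence "0 \<le> a * b" by simp
  moreover have "0 \<le> (a - b)\<^sup>2" by simp
  ultimately show ?thesis by (simp add: power2_eq_square algebra_simps)
qed

lemma in_H_add:
  assumes "in_H s f" "in_H s g" shows "in_H s (\<lambda>m. f m + g m)"
proof -
  have sf: "(\<lambda>m. 2 * (sob_weight s m * (cmod (f m))\<^sup>2) + 2 * (sob_weight s m * (cmod (g m))\<^sup>2)) summable_on UNIV"
    using assms unfolding in_H_def by (intro summable_on_add summable_on_cmult_right)
  show ?thesis unfolding in_H_def
  proof (rule summable_on_comparison_test[OF sf])
    fix m
    have "(cmod (f m + g m))\<^sup>2 \<le> (cmod (f m) + cmod (g m))\<^sup>2"
      by (simp add: norm_triangle_ineq power_mono)
    also have "\<dots> \<le> 2 * (cmod (f m))\<^sup>2 + 2 * (cmod (g m))\<^sup>2"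
      using sq2[of "cmod (f m)" "cmod (g m)"] .
    finally have "(cmod (f m + g m))\<^sup>2 \<le> 2 * (cmod (f m))\<^sup>2 + 2 * (cmod (g m))\<^sup>2" .
    hence "sob_weight s m * (cmod (f m + g m))\<^sup>2 \<le> sob_weight s m * (2 * (cmod (f m))\<^sup>2 + 2 * (cmod (g m))\<^sup>2)"
      by (intro mult_left_mono sob_weight_nonneg)
    thus "sob_weight s m * (cmod (f m + g m))\<^sup>2 \<le> 2 * (sob_weight s m * (cmod (f m))\<^sup>2) + 2 * (sob_weight s m * (cmod (g m))\<^sup>2)"
      by (simp add: algebra_simps)
    show "0 \<le> sob_weight s m * (cmod (f m + g m))\<^sup>2" by (simp add: sob_weight_nonneg)
  qed
qed

lemma in_H_fsum:
  assumes "finite P" "\<And>p. p \<in> P \<Longrightarrow> in_H s (g p)"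
  shows "in_H s (\<lambda>m. \<Sum>p\<in>P. c p * g p m)"
  using assms
proof (induction P rule: finite_induct)
  case empty thus ?case by (simp add: in_H_zero)
next
  case (insert x P)
  thus ?case using in_H_add[OF in_H_scale[of s "g x" "c x"]] by simp
qed

lemma blo_add: "bounded_linear_op r k F \<Longrightarrow> in_H r f \<Longrightarrow> in_H r g \<Longrightarrow> F (\<lambda>m. f m + g m) = (\<lambda>m. F f m + F g m)"
  unfolding bounded_linear_op_def by blast

lemma blo_scale: "bounded_linear_op r k F \<Longrightarrow> in_H r f \<Longrightarrow> F (\<lambda>m. c * f m) = (\<lambda>m. c * F f m)"
  unfolding bounded_linear_op_def by blast

lemma blo_in_H: "bounded_linear_op r k F \<Longrightarrow> in_H r f \<Longrightarrow> in_H k (F f)"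
  unfolding bounded_linear_op_def by blast

lemma F_zero: "bounded_linear_op r k F \<Longrightarrow> F (\<lambda>_. 0) = (\<lambda>_. 0)"
  using blo_scale[of r k F "\<lambda>_. 0" 0] in_H_zero[of r] by simp

lemma F_fsum:
  assumes F: "bounded_linear_op r k F" and "finite P" "\<And>p. p \<in> P \<Longrightarrow> in_H r (g p)"
  shows "F (\<lambda>m. \<Sum>p\<in>P. c p * g p m) = (\<lambda>m. \<Sum>p\<in>P. c p * F (g p) m)"
  using assms(2,3)
proof (induction P rule: finite_induct)
  case empty thus ?case using F_zero[OF F] by simp
next
  case (insert x P)
  have h1: "in_H r (\<lambda>m. c x * g x m)" using insert by (intro in_H_scale) auto
  have h2: "in_H r (\<lambda>m. \<Sum>p\<in>P. c p * g p m)" using insert by (intro in_H_fsum) auto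
  have add: "F (\<lambda>m. (c x * g x m) + (\<Sum>p\<in>P. c p * g p m)) = (\<lambda>m. F (\<lambda>m. c x * g x m) m + F (\<lambda>m. \<Sum>p\<in>P. c p * g p m) m)"
    by (rule blo_add[OF F h1 h2])
  have sc: "F (\<lambda>m. c x * g x m) = (\<lambda>m. c x * F (g x) m)"
    by (rule blo_scale[OF F]) (use insert in auto)
  have e: "(\<lambda>m. \<Sum>p\<in>insert x P. c p * g p m) = (\<lambda>m. (c x * g x m) + (\<Sum>p\<in>P. c p * g p m))"
    using insert(1,2) by simp
  show ?case unfolding e add sc using insert by simp
qed

lemma H_inner_summable:
  assumes "in_H s f" "in_H s g"
  shows "(\<lambda>m. complex_of_real (sob_weight s m) * f m * cnj (g m)) summable_on UNIV"
proof (rule abs_summable_summable)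
  have sf: "(\<lambda>m. (sob_weight s m * (cmod (f m))\<^sup>2) + (sob_weight s m * (cmod (g m))\<^sup>2)) summable_on UNIV"
    using assms unfolding in_H_def by (intro summable_on_add)
  show "(\<lambda>m. norm (complex_of_real (sob_weight s m) * f m * cnj (g m))) summable_on UNIV"
  proof (rule summable_on_comparison_test[OF sf])
    fix m
    have w: "0 \<le> sob_weight s m" by (rule sob_weight_nonneg)
    have "cmod (f m) * cmod (g m) \<le> (cmod (f m))\<^sup>2 + (cmod (g m))\<^sup>2"
      using sq1[of "cmod (f m)" "cmod (g m)"] by simp
    hence "sob_weight s m * (cmod (f m) * cmod (g m)) \<le> sob_weight s m * ((cmod (f m))\<^sup>2 + (cmod (g m))\<^sup>2)"
      by (intro mult_left_mono w)
    thus "norm (complex_of_real (sob_weight s m) * f m * cnj (g m)) \<le> sob_weight s m * (cmod (f m))\<^sup>2 + sob_weight s m * (cmod (g m))\<^sup>2"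
      using w by (simp add: norm_mult algebra_simps)
  qed auto
qed

lemma norm_fsum:
  assumes \<Phi>: "complete_orthonormal_system r \<Phi>" and P: "finite P" "P \<subseteq> {1..}"
  shows "(\<Sum>\<^sub>\<infinity>m. sob_weight r m * (cmod (\<Sum>p\<in>P. c p * \<Phi> p m))\<^sup>2) = (\<Sum>p\<in>P. (cmod (c p))\<^sup>2)"
proof -
  have inH: "in_H r (\<Phi> p)" if "p \<in> P" for p
  proof -
    have "p \<ge> 1" using P that by auto
    thus ?thesis using \<Phi> unfolding complete_orthonormal_system_def by blast
  qed
  have orth: "H_inner r (\<Phi> p) (\<Phi> q) = (if p = q then 1 else 0)" if "p \<in> P" "q \<in> P" for p q
  proof -
    have "p \<ge> 1" "q \<ge> 1" using P that by auto
    thus ?thesis using \<Phi> unfolding complete_orthonormal_system_def by blast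
  qed
  define f where "f = (\<lambda>m. \<Sum>p\<in>P. c p * \<Phi> p m)"
  have fH: "in_H r f" unfolding f_def by (rule in_H_fsum[OF P(1) inH])
  have sreal: "(\<lambda>m. sob_weight r m * (cmod (f m))\<^sup>2) summable_on UNIV" using fH by (simp add: in_H_def)
  have "complex_of_real (\<Sum>\<^sub>\<infinity>m. sob_weight r m * (cmod (f m))\<^sup>2) = (\<Sum>\<^sub>\<infinity>m. complex_of_real (sob_weight r m * (cmod (f m))\<^sup>2))"
    using has_sum_of_real[OF has_sum_infsum[OF sreal], where 'a=complex] by (simp add: infsumI)
  also have "\<dots> = (\<Sum>\<^sub>\<infinity>m. \<Sum>p\<in>P. \<Sum>q\<in>P. (c p * cnj (c q)) * (complex_of_real (sob_weight r m) * \<Phi> p m * cnj (\<Phi> q m)))"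
  proof (rule infsum_cong)
    fix m
    have "complex_of_real (sob_weight r m * (cmod (f m))\<^sup>2) = complex_of_real (sob_weight r m) * (f m * cnj (f m))"
      by (simp only: of_real_mult complex_norm_square)
    also have "\<dots> = (\<Sum>p\<in>P. \<Sum>q\<in>P. (c p * cnj (c q)) * (complex_of_real (sob_weight r m) * \<Phi> p m * cnj (\<Phi> q m)))"
    proof -
      have "f m * cnj (f m) = (\<Sum>p\<in>P. \<Sum>q\<in>P. (c p * \<Phi> p m) * (cnj (c q) * cnj (\<Phi> q m)))"
        unfolding f_def cnj_sum complex_cnj_mult by (rule sum_product)
      thus ?thesis by (simp add: sum_distrib_left mult.assoc mult.left_commute)
    qed
    finally show "complex_of_real (sob_weight r m * (cmod (f m))\<^sup>2) = \<dots>" .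
  qed
  also have "\<dots> = (\<Sum>p\<in>P. \<Sum>\<^sub>\<infinity>m. \<Sum>q\<in>P. (c p * cnj (c q)) * (complex_of_real (sob_weight r m) * \<Phi> p m * cnj (\<Phi> q m)))"
  proof -
    have "(\<lambda>m. \<Sum>q\<in>P. (c p * cnj (c q)) * (complex_of_real (sob_weight r m) * \<Phi> p m * cnj (\<Phi> q m))) summable_on UNIV"
      if p: "p \<in> P" for p
      using infsum_finite_sum[OF P(1), of "\<lambda>q m. (c p * cnj (c q)) * (complex_of_real (sob_weight r m) * \<Phi> p m * cnj (\<Phi> q m))" UNIV]
        summable_on_cmult_right[OF H_inner_summable[OF inH[OF p] inH]] by blast
    thus ?thesis
      using infsum_finite_sum[OF P(1), of "\<lambda>p m. \<Sum>q\<in>P. (c p * cnj (c q)) * (complex_of_real (sob_weight r m) * \<Phi> p m * cnj (\<Phi> q m))" UNIV]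
      by blast
  qed
  also have "\<dots> = (\<Sum>p\<in>P. \<Sum>q\<in>P. (c p * cnj (c q)) * H_inner r (\<Phi> p) (\<Phi> q))"
  proof (rule sum.cong[OF refl])
    fix p assume p: "p \<in> P"
    show "(\<Sum>\<^sub>\<infinity>m. \<Sum>q\<in>P. (c p * cnj (c q)) * (complex_of_real (sob_weight r m) * \<Phi> p m * cnj (\<Phi> q m))) =
          (\<Sum>q\<in>P. (c p * cnj (c q)) * H_inner r (\<Phi> p) (\<Phi> q))"
      using infsum_finite_sum[OF P(1), of "\<lambda>q m. (c p * cnj (c q)) * (complex_of_real (sob_weight r m) * \<Phi> p m * cnj (\<Phi> q m))" UNIV]
        summable_on_cmult_right[OF H_inner_summable[OF inH[OF p] inH]]
      by (simp add: infsum_cmult_right' H_inner_def)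
  qed
  also have "\<dots> = (\<Sum>p\<in>P. c p * cnj (c p))"
  proof (rule sum.cong[OF refl])
    fix p assume p: "p \<in> P"
    have "(\<Sum>q\<in>P. (c p * cnj (c q)) * H_inner r (\<Phi> p) (\<Phi> q)) = (\<Sum>q\<in>P. if p = q then c p * cnj (c q) else 0)"
      by (rule sum.cong) (auto simp: orth p)
    also have "\<dots> = c p * cnj (c p)" using P(1) p by (simp add: sum.delta)
    finally show "(\<Sum>q\<in>P. (c p * cnj (c q)) * H_inner r (\<Phi> p) (\<Phi> q)) = c p * cnj (c p)" .
  qed
  also have "\<dots> = complex_of_real (\<Sum>p\<in>P. (cmod (c p))\<^sup>2)"
    by (simp only: of_real_sum complex_norm_square)
  finally show ?thesis unfolding f_def by (simp only: of_real_eq_iff)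
qed



lemma H_norm_nonneg: "0 \<le> H_norm s f"
  unfolding H_norm_def by (simp add: infsum_nonneg sob_weight_nonneg)

lemma cns: "(complex_of_real (cmod z))\<^sup>2 = z * cnj z"
  using complex_norm_square[of z] by simp

lemma opnorm_bound:
  assumes F: "bounded_linear_op r k F" and f: "in_H r f" "H_norm r f \<le> 1"
  shows "H_norm k (F f) \<le> op_norm r k F"
proof -
  obtain B where B: "\<And>g. in_H r g \<Longrightarrow> H_norm k (F g) \<le> B * H_norm r g"
    using F unfolding bounded_linear_op_def by blast
  have bdd: "bdd_above {H_norm k (F g) | g. in_H r g \<and> H_norm r g \<le> 1}"
  proof (rule bdd_aboveI)
    fix y assume "y \<in> {H_norm k (F g) | g. in_H r g \<and> H_norm r g \<le> 1}"
    then obtain g where g: "y = H_norm k (F g)" "in_H r g" "H_norm r g \<le> 1" by blast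
    have "y \<le> B * H_norm r g" using B g by simp
    also have "\<dots> \<le> \<bar>B\<bar> * H_norm r g" by (intro mult_right_mono) (auto simp: H_norm_nonneg)
    also have "\<dots> \<le> \<bar>B\<bar> * 1" by (intro mult_left_mono g(3)) auto
    finally show "y \<le> \<bar>B\<bar>" by simp
  qed
  show ?thesis unfolding op_norm_def by (rule cSup_upper[OF _ bdd]) (use f in blast)
qed

lemma besselA:
  assumes \<Phi>: "complete_orthonormal_system r \<Phi>" and F: "bounded_linear_op r k F"
    and P: "finite P" "P \<subseteq> {1..}"
  shows "sob_weight k m * (\<Sum>p\<in>P. (cmod (F (\<Phi> p) m))\<^sup>2) \<le> (op_norm r k F)\<^sup>2"
proof -
  define s where "s = (\<Sum>p\<in>P. (cmod (F (\<Phi> p) m))\<^sup>2)"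
  have s0: "0 \<le> s" unfolding s_def by (simp add: sum_nonneg)
  show ?thesis
  proof (cases "s = 0")
    case True thus ?thesis by (simp add: s_def[symmetric])
  next
    case False
    hence sp: "0 < s" using s0 by simp
    have inH: "in_H r (\<Phi> p)" if "p \<in> P" for p
    proof -
      have "p \<ge> 1" using P that by auto
      thus ?thesis using \<Phi> unfolding complete_orthonormal_system_def by blast
    qed
    define c where "c = (\<lambda>p. cnj (F (\<Phi> p) m) / complex_of_real (sqrt s))"
    define f where "f = (\<lambda>m'. \<Sum>p\<in>P. c p * \<Phi> p m')"
    have fH: "in_H r f" unfolding f_def by (rule in_H_fsum[OF P(1) inH])
    have "(\<Sum>p\<in>P. (cmod (c p))\<^sup>2) = (\<Sum>p\<in>P. (cmod (F (\<Phi> p) m))\<^sup>2 / s)"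
      unfolding c_def using sp by (simp add: norm_divide power_divide)
    also have "\<dots> = 1" using sp by (simp add: sum_divide_distrib[symmetric] s_def)
    finally have c1: "(\<Sum>p\<in>P. (cmod (c p))\<^sup>2) = 1" .
    have Hf: "H_norm r f = 1"
      unfolding H_norm_def f_def norm_fsum[OF \<Phi> P] c1 by simp
    have Ff: "F f = (\<lambda>m'. \<Sum>p\<in>P. c p * F (\<Phi> p) m')"
      unfolding f_def by (rule F_fsum[OF F P(1) inH])
    have "F f m = (\<Sum>p\<in>P. complex_of_real ((cmod (F (\<Phi> p) m))\<^sup>2)) / complex_of_real (sqrt s)"
      unfolding Ff c_def by (simp add: sum_divide_distrib cns mult.commute)
    also have "\<dots> = complex_of_real (s / sqrt s)" by (simp add: s_def)
    finally have "cmod (F f m) = s / sqrt s" using sp by (simp add: norm_divide)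
    hence Ffm: "(cmod (F f m))\<^sup>2 = s" using sp by (simp add: power_divide power2_eq_square)
    have FH: "in_H k (F f)" by (rule blo_in_H[OF F fH])
    have "sob_weight k m * s = (\<Sum>m'\<in>{m}. sob_weight k m' * (cmod (F f m'))\<^sup>2)" using Ffm by simp
    also have "\<dots> \<le> (\<Sum>\<^sub>\<infinity>m'. sob_weight k m' * (cmod (F f m'))\<^sup>2)"
      by (rule finite_sum_le_infsum) (use FH in \<open>auto simp: in_H_def sob_weight_nonneg\<close>)
    also have "\<dots> = (H_norm k (F f))\<^sup>2"
      unfolding H_norm_def by (simp add: infsum_nonneg sob_weight_nonneg)
    also have "\<dots> \<le> (op_norm r k F)\<^sup>2"
      by (rule power_mono[OF opnorm_bound[OF F fH] H_norm_nonneg]) (simp add: Hf)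
    finally show ?thesis by (simp add: s_def)
  qed
qed



lemma nat_powr_summable:
  fixes t :: real assumes t: "t < -1/2"
  shows "summable (\<lambda>n::nat. (1 + (real n)\<^sup>2) powr t)"
proof (rule summable_comparison_test'[where N=1])
  show "summable (\<lambda>n::nat. real n powr (2*t))" using t by (subst summable_real_powr_iff) auto
  fix n :: nat assume n: "n \<ge> 1"
  have "(1 + (real n)\<^sup>2) powr t \<le> ((real n)\<^sup>2) powr t"
    by (rule powr_mono2') (use t n in auto)
  also have "\<dots> = real n powr (2*t)" by (simp add: powr_powr[symmetric] powr_realpow)
  finally show "norm ((1 + (real n)\<^sup>2) powr t) \<le> real n powr (2*t)" by simp
qed

lemma int_powr_summable:
  fixes t :: real assumes t: "t < -1/2"
  shows "(\<lambda>x::int. (1 + (real_of_int x)\<^sup>2) powr t) summable_on UNIV"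
proof -
  let ?g = "\<lambda>x::int. (1 + (real_of_int x)\<^sup>2) powr t"
  have n: "(\<lambda>n::nat. (1 + (real n)\<^sup>2) powr t) summable_on UNIV"
    using nat_powr_summable[OF t] by (subst summable_on_UNIV_nonneg_real_iff) auto
  have s1: "?g summable_on (range int)"
    by (subst summable_on_reindex) (use n in \<open>auto simp: o_def inj_on_def\<close>)
  have s2: "?g summable_on (range (\<lambda>n. - int n))"
    by (subst summable_on_reindex) (use n in \<open>auto simp: o_def inj_on_def\<close>)
  have U: "UNIV = range int \<union> range (\<lambda>n. - int n)"
  proof -
    have "x \<in> range int \<union> range (\<lambda>n. - int n)" for x :: int
    proof (cases "x \<ge> 0")
      case True thus ?thesis by (intro UnI1 image_eqI[of _ _ "nat x"]) auto
    next
      case False thus ?thesis by (intro UnI2 image_eqI[of _ _ "nat (-x)"]) auto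
    qed
    thus ?thesis by auto
  qed
  show ?thesis by (subst U, rule summable_on_union[OF s1 s2])
qed

lemma lattice_summable:
  fixes k :: real assumes k: "k > 3"
  shows "(\<lambda>m::int\<times>int. \<bar>real_of_int (fst m)\<bar> / sqrt (sob_weight k m)) summable_on UNIV"
proof -
  define t where "t = (1 - k) / 4"
  have t: "t < -1/2" using k by (simp add: t_def)
  let ?g = "\<lambda>x::int. (1 + (real_of_int x)\<^sup>2) powr t"
  have g: "?g summable_on UNIV" by (rule int_powr_summable[OF t])
  have prod: "(\<lambda>m::int\<times>int. ?g (fst m) * ?g (snd m)) summable_on Sigma UNIV (\<lambda>_. UNIV)"
  proof (rule summable_on_SigmaI[where g="\<lambda>x. ?g x * infsum ?g UNIV"])
    show "((\<lambda>y. ?g (fst (x, y)) * ?g (snd (x, y))) has_sum ?g x * infsum ?g UNIV) UNIV" for x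
      using has_sum_cmult_right[OF has_sum_infsum[OF g], of "?g x"] by simp
    show "(\<lambda>x. ?g x * infsum ?g UNIV) summable_on UNIV" by (rule summable_on_cmult_left[OF g])
  qed auto
  show ?thesis
  proof (rule summable_on_comparison_test[OF prod[simplified]])
    fix m :: "int \<times> int"
    obtain x y where m: "m = (x, y)" by (cases m)
    define a where "a = (real_of_int x)\<^sup>2" define b where "b = (real_of_int y)\<^sup>2"
    have a: "0 \<le> a" and b: "0 \<le> b" by (auto simp: a_def b_def)
    define Q where "Q = 1 + a + b"
    have Q: "1 \<le> Q" using a b by (simp add: Q_def)
    have sw: "sqrt (sob_weight k m) = Q powr (k/2)"
      unfolding sob_weight_def m Q_def a_def b_def using Q_def Q
      by (simp add: powr_half_sqrt_powr)
    have bx: "\<bar>real_of_int x\<bar> \<le> Q powr (1/2)"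
    proof -
      have "\<bar>real_of_int x\<bar> = sqrt a" by (simp add: a_def)
      also have "\<dots> \<le> sqrt Q" using b by (simp add: Q_def)
      also have "\<dots> = Q powr (1/2)" using Q by (simp add: powr_half_sqrt)
      finally show ?thesis .
    qed
    have "\<bar>real_of_int x\<bar> / Q powr (k/2) \<le> Q powr (1/2) / Q powr (k/2)"
      by (rule divide_right_mono[OF bx]) simp
    also have "\<dots> = Q powr (1/2 - k/2)" using Q by (simp add: powr_diff)
    also have "(1/2 - k/2) = 2*t" by (simp add: t_def field_simps)
    also have "Q powr (2*t) = (Q\<^sup>2) powr t" using Q by (simp add: powr_powr[symmetric] powr_realpow)
    also have "\<dots> \<le> ((1 + a) * (1 + b)) powr t"
    proof (rule powr_mono2')
      show "t \<le> 0" using t by simp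
      show "0 < (1 + a) * (1 + b)" using a b by (intro mult_pos_pos) auto
      have "0 \<le> a*b" "0 \<le> a*a" "0 \<le> b*b" using a b by auto
      thus "(1 + a) * (1 + b) \<le> Q\<^sup>2" using a b unfolding Q_def power2_eq_square by (simp add: algebra_simps)
    qed
    also have "\<dots> = ?g x * ?g y" by (simp add: powr_mult a_def b_def)
    finally show "\<bar>real_of_int (fst m)\<bar> / sqrt (sob_weight k m) \<le> ?g (fst m) * ?g (snd m)"
      using sw m by simp
    show "0 \<le> \<bar>real_of_int (fst m)\<bar> / sqrt (sob_weight k m)" by (simp add: sob_weight_nonneg)
  qed
qed



lemma opnorm_nonneg:
  assumes F: "bounded_linear_op r k F" shows "0 \<le> op_norm r k F"
proof -
  have "H_norm r (\<lambda>_. 0) = 0" by (simp add: H_norm_def)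
  hence "H_norm k (F (\<lambda>_. 0)) \<le> op_norm r k F" by (intro opnorm_bound[OF F in_H_zero]) simp
  thus ?thesis using H_norm_nonneg order_trans by blast
qed

lemma coef_bound:
  assumes \<Phi>: "complete_orthonormal_system r \<Phi>" and F: "bounded_linear_op r k F" and p: "p \<ge> 1"
  shows "sqrt (sob_weight k m) * cmod (F (\<Phi> p) m) \<le> op_norm r k F"
proof -
  have "sob_weight k m * (cmod (F (\<Phi> p) m))\<^sup>2 \<le> (op_norm r k F)\<^sup>2"
    using besselA[OF \<Phi> F, of "{p}" m] p by simp
  hence "sqrt (sob_weight k m * (cmod (F (\<Phi> p) m))\<^sup>2) \<le> sqrt ((op_norm r k F)\<^sup>2)"
    by (rule real_sqrt_le_mono)
  thus ?thesis using opnorm_nonneg[OF F] by (simp add: real_sqrt_mult sob_weight_nonneg)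
qed

lemma step3:
  fixes k r :: real
  assumes k: "k > 3" and \<Phi>: "complete_orthonormal_system r \<Phi>" and F: "bounded_linear_op r k F"
  defines "L \<equiv> op_norm r k F"
    and "D \<equiv> (\<Sum>\<^sub>\<infinity>m::int\<times>int. \<bar>real_of_int (fst m)\<bar> / sqrt (sob_weight k m))"
    and "N \<equiv> (\<lambda>p. \<Sum>\<^sub>\<infinity>m. cmod (\<i> * of_int (fst m) * F (\<Phi> p) m))"
  shows "\<And>p. p \<ge> 1 \<Longrightarrow> (\<lambda>m. cmod (\<i> * of_int (fst m) * F (\<Phi> p) m)) summable_on UNIV"
    and "(\<lambda>p. (N p)\<^sup>2) summable_on {1..}"
    and "infsum (\<lambda>p. (N p)\<^sup>2) {1..} \<le> L\<^sup>2 * D\<^sup>2"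
proof -
  define b where "b = (\<lambda>m::int\<times>int. \<bar>real_of_int (fst m)\<bar>)"
  define q where "q = (\<lambda>m. sqrt (sob_weight k m))"
  define a where "a = (\<lambda>p m. cmod (F (\<Phi> p) m))"
  have q: "q m > 0" for m by (simp add: q_def sob_weight_pos)
  have b0: "b m \<ge> 0" for m by (simp add: b_def)
  have L0: "L \<ge> 0" unfolding L_def by (rule opnorm_nonneg[OF F])
  have Ds: "(\<lambda>m. b m / q m) summable_on UNIV" unfolding b_def q_def by (rule lattice_summable[OF k])
  have D0: "D \<ge> 0" unfolding D_def by (rule infsum_nonneg) (simp add: sob_weight_nonneg)
  have Deq: "D = (\<Sum>\<^sub>\<infinity>m. b m / q m)" by (simp add: D_def b_def q_def)
  have cm: "cmod (\<i> * of_int (fst m) * F (\<Phi> p) m) = b m * a p m" for p m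
    by (simp add: norm_mult b_def a_def)
  have aq: "q m * a p m \<le> L" if "p \<ge> 1" for p m
    unfolding q_def a_def L_def by (rule coef_bound[OF \<Phi> F that])
  have ba: "b m * a p m \<le> L * (b m / q m)" if "p \<ge> 1" for p m
  proof -
    have "a p m \<le> L / q m" using aq[OF that, of m] q[of m] by (simp add: field_simps)
    hence "b m * a p m \<le> b m * (L / q m)" using b0[of m] by (rule mult_left_mono)
    thus ?thesis by (simp add: mult.commute)
  qed
  show Ns: "(\<lambda>m. cmod (\<i> * of_int (fst m) * F (\<Phi> p) m)) summable_on UNIV" if "p \<ge> 1" for p
    unfolding cm
    by (rule summable_on_comparison_test[OF summable_on_cmult_right[OF Ds, of L]])
       (use ba[OF that] b0 in \<open>auto simp: a_def\<close>)
  have Neq: "N p = (\<Sum>\<^sub>\<infinity>m. b m * a p m)" for p unfolding N_def cm by simp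
  define E where "E = (\<lambda>p. \<Sum>\<^sub>\<infinity>m. b m * q m * (a p m)\<^sup>2)"
  have Eterm: "b m * q m * (a p m)\<^sup>2 \<le> L\<^sup>2 * (b m / q m)" if "p \<ge> 1" for p m
  proof -
    have "(q m * a p m)^2 \<le> L^2" using aq[OF that, of m] q[of m] by (intro power_mono) (auto simp: a_def)
    hence "b m * ((q m * a p m)^2) \<le> b m * L^2" by (intro mult_left_mono b0)
    thus ?thesis using q[of m] by (simp add: field_simps power2_eq_square)
  qed
  have Enn: "0 \<le> b m * q m * (a p m)\<^sup>2" for p m using b0[of m] q[of m] by simp
  have Es: "(\<lambda>m. b m * q m * (a p m)\<^sup>2) summable_on UNIV" if "p \<ge> 1" for p
    by (rule summable_on_comparison_test[OF summable_on_cmult_right[OF Ds, of "L\<^sup>2"]])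
       (use Eterm[OF that] Enn in auto)
  have CS: "(N p)\<^sup>2 \<le> D * E p" if p: "p \<ge> 1" for p
  proof -
    have E0: "0 \<le> E p" unfolding E_def by (rule infsum_nonneg) (rule Enn)
    have "N p \<le> sqrt (D * E p)"
      unfolding Neq
    proof (rule infsum_le_finite_sums)
      show "(\<lambda>m. b m * a p m) summable_on UNIV" using Ns[OF p] unfolding cm .
      fix M :: "(int\<times>int) set" assume M: "finite M" "M \<subseteq> UNIV"
      have e1: "b m * a p m = sqrt (b m / q m) * (sqrt (b m * q m) * a p m)" for m
      proof -
        have "sqrt (b m / q m) * sqrt (b m * q m) = sqrt ((b m)^2)"
          using q[of m] by (simp add: real_sqrt_mult[symmetric] power2_eq_square)
        thus ?thesis using b0[of m] by (simp add: mult.assoc[symmetric])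
      qed
      have "(\<Sum>m\<in>M. b m * a p m)\<^sup>2 \<le> (\<Sum>m\<in>M. (sqrt (b m / q m))\<^sup>2) * (\<Sum>m\<in>M. (sqrt (b m * q m) * a p m)\<^sup>2)"
        unfolding e1 by (rule Cauchy_Schwarz_ineq_sum)
      also have "\<dots> = (\<Sum>m\<in>M. b m / q m) * (\<Sum>m\<in>M. b m * q m * (a p m)\<^sup>2)"
        using b0 q by (simp add: power_mult_distrib less_imp_le)
      also have "\<dots> \<le> D * E p"
      proof (rule mult_mono)
        show "(\<Sum>m\<in>M. b m / q m) \<le> D" unfolding Deq
          by (rule finite_sum_le_infsum[OF Ds M(1)]) (use b0 q in \<open>auto intro: divide_nonneg_pos\<close>)
        show "(\<Sum>m\<in>M. b m * q m * (a p m)\<^sup>2) \<le> E p" unfolding E_def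
          by (rule finite_sum_le_infsum[OF Es[OF p] M(1)]) (use Enn in auto)
      qed (use D0 E0 Enn in \<open>auto intro: sum_nonneg\<close>)
      finally show "(\<Sum>m\<in>M. b m * a p m) \<le> sqrt (D * E p)" by (rule real_le_rsqrt)
    qed
    moreover have "0 \<le> N p" unfolding N_def by (rule infsum_nonneg) simp
    ultimately have "(N p)^2 \<le> (sqrt (D * E p))^2" by (rule power_mono)
    thus ?thesis using D0 E0 by simp
  qed
  have Esum: "(\<Sum>p\<in>P. E p) \<le> L\<^sup>2 * D" if P: "finite P" "P \<subseteq> {1..}" for P
  proof -
    have EsP: "(\<lambda>m. b m * q m * (a p m)\<^sup>2) summable_on UNIV" if "p \<in> P" for p
      using Es P(2) that by auto
    note IF = infsum_finite_sum[OF P(1), of "\<lambda>p m. b m * q m * (a p m)\<^sup>2" UNIV, OF EsP]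
    have "(\<Sum>p\<in>P. E p) = (\<Sum>\<^sub>\<infinity>m. \<Sum>p\<in>P. b m * q m * (a p m)\<^sup>2)"
      unfolding E_def using IF by simp
    also have "\<dots> \<le> (\<Sum>\<^sub>\<infinity>m. L\<^sup>2 * (b m / q m))"
    proof (rule infsum_mono)
      show "(\<lambda>m. \<Sum>p\<in>P. b m * q m * (a p m)\<^sup>2) summable_on UNIV"
        using IF by simp
      show "(\<lambda>m. L\<^sup>2 * (b m / q m)) summable_on UNIV" by (rule summable_on_cmult_right[OF Ds])
      fix m
      have "sob_weight k m * (\<Sum>p\<in>P. (a p m)\<^sup>2) \<le> L\<^sup>2"
        unfolding a_def L_def by (rule besselA[OF \<Phi> F P])
      hence "(q m)^2 * (\<Sum>p\<in>P. (a p m)\<^sup>2) \<le> L\<^sup>2" by (simp add: q_def sob_weight_nonneg)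
      hence "b m * ((q m)^2 * (\<Sum>p\<in>P. (a p m)\<^sup>2)) \<le> b m * L\<^sup>2" by (intro mult_left_mono b0)
      thus "(\<Sum>p\<in>P. b m * q m * (a p m)\<^sup>2) \<le> L\<^sup>2 * (b m / q m)"
        using q[of m] by (simp add: sum_distrib_left[symmetric] field_simps power2_eq_square)
    qed
    also have "\<dots> = L\<^sup>2 * D" unfolding Deq by (rule infsum_cmult_right')
    finally show ?thesis .
  qed
  have Nsum: "(\<Sum>p\<in>P. (N p)\<^sup>2) \<le> L\<^sup>2 * D\<^sup>2" if P: "finite P" "P \<subseteq> {1..}" for P
  proof -
    have "(\<Sum>p\<in>P. (N p)\<^sup>2) \<le> (\<Sum>p\<in>P. D * E p)" by (rule sum_mono, rule CS) (use P in auto)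
    also have "\<dots> = D * (\<Sum>p\<in>P. E p)" by (simp add: sum_distrib_left)
    also have "\<dots> \<le> D * (L\<^sup>2 * D)" by (rule mult_left_mono[OF Esum[OF P] D0])
    finally show ?thesis by (simp add: power2_eq_square algebra_simps)
  qed
  show Nss: "(\<lambda>p. (N p)\<^sup>2) summable_on {1..}"
    by (rule nonneg_bdd_above_summable_on) (auto intro!: bdd_aboveI[where M="L\<^sup>2 * D\<^sup>2"] Nsum)
  show "infsum (\<lambda>p. (N p)\<^sup>2) {1..} \<le> L\<^sup>2 * D\<^sup>2"
    by (rule infsum_le_finite_sums[OF Nss], rule Nsum)
qed



definition ee :: "real \<Rightarrow> complex" where "ee t = exp (\<i> * complex_of_real t)"

lemma norm_ee[simp]: "norm (ee t) = 1" by (simp add: ee_def)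

lemma dt_eq: "dtheta1 f x y = (\<Sum>\<^sub>\<infinity>m. (\<i> * of_int (fst m) * f m) * (ee (real_of_int (fst m) * x) * ee (real_of_int (snd m) * y)))"
  unfolding dtheta1_def ee_def
  by (rule infsum_cong) (simp add: distrib_left exp_add mult.assoc)

lemma sum3: "(\<Sum>x\<in>{..<n}\<times>{..<n}\<times>{..<n}. f x) = (\<Sum>i<(n::nat). \<Sum>j<n. \<Sum>k<n. f (i,j,k))"
  by (simp add: sum.cartesian_product)

lemma final_gen:
  fixes k r :: real and \<beta> :: "nat \<Rightarrow> int \<times> int \<Rightarrow> complex" and co :: "'x \<Rightarrow> complex"
    and V W :: "'x \<Rightarrow> int \<times> int \<Rightarrow> complex"
  assumes I: "finite I"
    and \<beta>s: "\<And>p. p \<ge> 1 \<Longrightarrow> (\<lambda>m. norm (\<beta> p m)) summable_on UNIV"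
    and Ns: "(\<lambda>p. (\<Sum>\<^sub>\<infinity>m. norm (\<beta> p m))\<^sup>2) summable_on {1..}"
    and Nb: "infsum (\<lambda>p. (\<Sum>\<^sub>\<infinity>m. norm (\<beta> p m))\<^sup>2) {1..} \<le> K"
    and V: "\<And>x m. norm (V x m) \<le> 1" and W: "\<And>x m. norm (W x m) \<le> 1"
    and M: "\<And>m m'. norm (\<Sum>x\<in>I. co x * V x m * cnj (W x m')) \<le> M"
  shows "norm (\<Sum>x\<in>I. co x * (\<Sum>\<^sub>\<infinity>p\<in>{1..}. (\<Sum>\<^sub>\<infinity>m. \<beta> p m * V x m) * cnj (\<Sum>\<^sub>\<infinity>m. \<beta> p m * W x m))) \<le> M * K"
proof -
  define N where "N = (\<lambda>p. \<Sum>\<^sub>\<infinity>m. norm (\<beta> p m))"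
  define h where "h = (\<lambda>p x. (\<Sum>\<^sub>\<infinity>m. \<beta> p m * V x m) * cnj (\<Sum>\<^sub>\<infinity>m. \<beta> p m * W x m))"
  have M0: "0 \<le> M" using M[of undefined undefined] norm_ge_zero order_trans by blast
  have Ns': "(\<lambda>p. (N p)\<^sup>2) summable_on {1..}" using Ns by (simp add: N_def)
  have nG: "norm (\<Sum>\<^sub>\<infinity>m. \<beta> p m * U m) \<le> N p" if p: "p \<ge> 1" and U: "\<And>m. norm (U m) \<le> 1" for p U
  proof -
    have "norm (\<Sum>\<^sub>\<infinity>m. \<beta> p m * U m) \<le> (\<Sum>\<^sub>\<infinity>m. norm (\<beta> p m * U m))"
      by (rule norm_infsum_bound, rule abs_summ_bounded(2)[OF \<beta>s[OF p] U])
    also have "\<dots> \<le> N p" unfolding N_def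
      by (rule infsum_mono[OF abs_summ_bounded(2)[OF \<beta>s[OF p] U] \<beta>s[OF p]])
         (simp add: norm_mult mult_left_le U)
    finally show ?thesis .
  qed
  have nh: "norm (h p x) \<le> (N p)\<^sup>2" if p: "p \<ge> 1" for p x
  proof -
    have N0: "0 \<le> N p" unfolding N_def by (rule infsum_nonneg) simp
    have "norm (h p x) = norm (\<Sum>\<^sub>\<infinity>m. \<beta> p m * V x m) * norm (\<Sum>\<^sub>\<infinity>m. \<beta> p m * W x m)"
      by (simp add: h_def norm_mult)
    also have "\<dots> \<le> N p * N p" by (intro mult_mono nG p V W N0) auto
    finally show ?thesis by (simp add: power2_eq_square)
  qed
  have hs: "(\<lambda>p. co x * h p x) summable_on {1..}" for x
  proof (rule summable_on_cmult_right, rule abs_summable_summable)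
    show "(\<lambda>p. norm (h p x)) summable_on {1..}"
      by (rule summable_on_comparison_test[OF Ns']) (use nh in auto)
  qed
  have per: "norm (\<Sum>x\<in>I. co x * h p x) \<le> M * (N p)\<^sup>2" if p: "p \<ge> 1" for p
    using main_gen[OF I \<beta>s[OF p] V W M] by (simp add: h_def N_def mult.assoc)
  have eq: "(\<Sum>x\<in>I. co x * (\<Sum>\<^sub>\<infinity>p\<in>{1..}. h p x)) = (\<Sum>\<^sub>\<infinity>p\<in>{1..}. \<Sum>x\<in>I. co x * h p x)"
    using infsum_finite_sum[OF I, of "\<lambda>x p. co x * h p x" "{1..}"] hs by (simp add: infsum_cmult_right')
  have MN: "(\<lambda>p. M * (N p)\<^sup>2) summable_on {1..}" by (rule summable_on_cmult_right[OF Ns'])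
  have ab: "(\<lambda>p. norm (\<Sum>x\<in>I. co x * h p x)) summable_on {1..}"
    by (rule summable_on_comparison_test[OF MN]) (use per in auto)
  have "norm (\<Sum>\<^sub>\<infinity>p\<in>{1..}. \<Sum>x\<in>I. co x * h p x) \<le> (\<Sum>\<^sub>\<infinity>p\<in>{1..}. norm (\<Sum>x\<in>I. co x * h p x))"
    by (rule norm_infsum_bound[OF ab])
  also have "\<dots> \<le> (\<Sum>\<^sub>\<infinity>p\<in>{1..}. M * (N p)\<^sup>2)" by (rule infsum_mono[OF ab MN]) (use per in auto)
  also have "\<dots> = M * (\<Sum>\<^sub>\<infinity>p\<in>{1..}. (N p)\<^sup>2)" by (rule infsum_cmult_right')
  also have "\<dots> \<le> M * K" using Nb M0 by (intro mult_left_mono) (auto simp: N_def)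
  finally have "norm (\<Sum>x\<in>I. co x * (\<Sum>\<^sub>\<infinity>p\<in>{1..}. h p x)) \<le> M * K" unfolding eq .
  thus ?thesis by (simp add: h_def)
qed

lemma signs_one: "(\<lambda>_. 1) \<in> signs n" by (simp add: signs_def)

lemma T_abs_bound:
  fixes a :: "nat \<Rightarrow> nat \<Rightarrow> nat \<Rightarrow> real"
  assumes "r \<in> signs n" "s \<in> signs n" "t \<in> signs n"
  shows "\<bar>\<Sum>i<n. \<Sum>j<n. \<Sum>k<n. a i j k * r i * s j * t k\<bar> \<le> (\<Sum>i<n. \<Sum>j<n. \<Sum>k<n. \<bar>a i j k\<bar>)"
proof -
  have b: "\<bar>a i j k * r i * s j * t k\<bar> \<le> \<bar>a i j k\<bar>" for i j k
  proof -
    have "\<bar>r i\<bar> \<le> 1" "\<bar>s j\<bar> \<le> 1" "\<bar>t k\<bar> \<le> 1" using assms signs_abs by auto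
    hence "\<bar>r i * s j * t k\<bar> \<le> 1" by (simp add: abs_mult mult_le_one)
    hence "\<bar>a i j k\<bar> * \<bar>r i * s j * t k\<bar> \<le> \<bar>a i j k\<bar> * 1" by (intro mult_left_mono) auto
    thus ?thesis by (simp add: abs_mult mult.assoc)
  qed
  show ?thesis
    by (rule order_trans[OF sum_abs], rule sum_mono, rule order_trans[OF sum_abs], rule sum_mono,
        rule order_trans[OF sum_abs], rule sum_mono, rule b)
qed

lemma S_gen:
  fixes a :: "nat \<Rightarrow> nat \<Rightarrow> nat \<Rightarrow> real" and n :: nat
  defines "SS \<equiv> Sup {\<bar>(1 / real n ^ 3) * (\<Sum>i<n. \<Sum>j<n. \<Sum>k<n. a i j k * r i * s j * t k)\<bar>
      | r s t. r \<in> signs n \<and> s \<in> signs n \<and> t \<in> signs n}"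
  assumes n: "n > 0"
  shows "0 \<le> SS"
    and "\<And>x y z. \<forall>i<n. \<bar>x i\<bar> \<le> 1 \<Longrightarrow> \<forall>i<n. \<bar>y i\<bar> \<le> 1 \<Longrightarrow> \<forall>i<n. \<bar>z i\<bar> \<le> 1 \<Longrightarrow>
         \<bar>\<Sum>i<n. \<Sum>j<n. \<Sum>k<n. a i j k * x i * y j * z k\<bar> \<le> real n ^ 3 * SS"
proof -
  let ?A = "{\<bar>(1 / real n ^ 3) * (\<Sum>i<n. \<Sum>j<n. \<Sum>k<n. a i j k * r i * s j * t k)\<bar>
      | r s t. r \<in> signs n \<and> s \<in> signs n \<and> t \<in> signs n}"
  have bdd: "bdd_above ?A"
  proof (rule bdd_aboveI)
    fix y assume "y \<in> ?A"
    then obtain r s t where y: "y = \<bar>(1 / real n ^ 3) * (\<Sum>i<n. \<Sum>j<n. \<Sum>k<n. a i j k * r i * s j * t k)\<bar>"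
      and rst: "r \<in> signs n" "s \<in> signs n" "t \<in> signs n" by blast
    have "y = (1 / real n ^ 3) * \<bar>\<Sum>i<n. \<Sum>j<n. \<Sum>k<n. a i j k * r i * s j * t k\<bar>"
      unfolding y by (simp add: abs_mult)
    also have "\<dots> \<le> (1 / real n ^ 3) * (\<Sum>i<n. \<Sum>j<n. \<Sum>k<n. \<bar>a i j k\<bar>)"
      by (intro mult_left_mono T_abs_bound rst) auto
    finally show "y \<le> (1 / real n ^ 3) * (\<Sum>i<n. \<Sum>j<n. \<Sum>k<n. \<bar>a i j k\<bar>)" .
  qed
  have up: "\<bar>(1 / real n ^ 3) * (\<Sum>i<n. \<Sum>j<n. \<Sum>k<n. a i j k * r i * s j * t k)\<bar> \<le> SS"
    if "r \<in> signs n" "s \<in> signs n" "t \<in> signs n" for r s t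
    unfolding SS_def by (rule cSup_upper[OF _ bdd]) (use that in blast)
  show "0 \<le> SS" using up[OF signs_one signs_one signs_one] abs_ge_zero order_trans by blast
  fix x y z :: "nat \<Rightarrow> real"
  assume xyz: "\<forall>i<n. \<bar>x i\<bar> \<le> 1" "\<forall>i<n. \<bar>y i\<bar> \<le> 1" "\<forall>i<n. \<bar>z i\<bar> \<le> 1"
  obtain r s t where rst: "r \<in> signs n" "s \<in> signs n" "t \<in> signs n"
    and le: "\<bar>\<Sum>i<n. \<Sum>j<n. \<Sum>k<n. a i j k * x i * y j * z k\<bar> \<le> \<bar>\<Sum>i<n. \<Sum>j<n. \<Sum>k<n. a i j k * r i * s j * t k\<bar>"
    using trilin_sign[OF xyz] by blast
  have "\<bar>\<Sum>i<n. \<Sum>j<n. \<Sum>k<n. a i j k * r i * s j * t k\<bar>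
        = real n ^ 3 * \<bar>(1 / real n ^ 3) * (\<Sum>i<n. \<Sum>j<n. \<Sum>k<n. a i j k * r i * s j * t k)\<bar>"
    using n by (simp add: abs_mult)
  also have "\<dots> \<le> real n ^ 3 * SS" by (intro mult_left_mono up rst) auto
  finally show "\<bar>\<Sum>i<n. \<Sum>j<n. \<Sum>k<n. a i j k * x i * y j * z k\<bar> \<le> real n ^ 3 * SS" using le by linarith
qed



theorem mainTheorem9:
  fixes k r :: real and \<Phi> :: "nat \<Rightarrow> fourier2" and F :: "fourier2 \<Rightarrow> fourier2"
  assumes "k > 3" and "r > 0"
    and "complete_orthonormal_system r \<Phi>"
    and "bounded_linear_op r k F"
  shows "\<exists>C>0. \<forall>(n::nat) (pn::real) (\<xi>::nat \<Rightarrow> nat \<Rightarrow> real) (u::nat \<Rightarrow> real).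
     n \<ge> 2 \<and> 0 < pn \<and> pn \<le> 1 \<and> (\<forall>i<n. \<forall>j<n. \<xi> i j \<in> {0, 1}) \<longrightarrow>
       cmod (c_ij_ik n pn \<xi> \<Phi> F u) \<le> C * S_ij_ik n pn \<xi> * (op_norm r k F)\<^sup>2 \<and>
       cmod (c_ik_jk n pn \<xi> \<Phi> F u) \<le> C * S_ik_jk n pn \<xi> * (op_norm r k F)\<^sup>2"
proof -
  note k = assms(1) and \<Phi> = assms(3) and F = assms(4)
  define D where "D = (\<Sum>\<^sub>\<infinity>m::int\<times>int. \<bar>real_of_int (fst m)\<bar> / sqrt (sob_weight k m))"
  define L where "L = op_norm r k F"
  define \<beta> where "\<beta> = (\<lambda>p m. \<i> * of_int (fst m) * F (\<Phi> p) m)"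
  note st = step3[OF k \<Phi> F]
  have \<beta>s: "\<And>p. p \<ge> 1 \<Longrightarrow> (\<lambda>m. norm (\<beta> p m)) summable_on UNIV" unfolding \<beta>_def using st(1) by simp
  have Ns: "(\<lambda>p. (\<Sum>\<^sub>\<infinity>m. norm (\<beta> p m))\<^sup>2) summable_on {1..}" unfolding \<beta>_def using st(2) by simp
  have Nb: "infsum (\<lambda>p. (\<Sum>\<^sub>\<infinity>m. norm (\<beta> p m))\<^sup>2) {1..} \<le> L\<^sup>2 * D\<^sup>2"
    unfolding \<beta>_def L_def D_def using st(3) by simp
  have L0: "0 \<le> L" unfolding L_def by (rule opnorm_nonneg[OF F])
  have dt: "dtheta1 (F (\<Phi> p)) x y = (\<Sum>\<^sub>\<infinity>m. \<beta> p m * (ee (real_of_int (fst m) * x) * ee (real_of_int (snd m) * y)))" for p x y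
    unfolding \<beta>_def by (rule dt_eq)
  define I where "I = (\<lambda>n::nat. {..<n}\<times>{..<n}\<times>{..<n})"
  have fI: "finite (I n)" for n by (simp add: I_def)
  have ee1: "norm (ee a * ee b) \<le> 1" for a b by (simp add: norm_mult)
  define C where "C = 8 * D\<^sup>2 + 1"
  show ?thesis
  proof (rule exI[of _ C], intro conjI allI impI)
    show "C > 0" by (simp add: C_def add_nonneg_pos)
    fix n :: nat and pn :: real and \<xi> :: "nat \<Rightarrow> nat \<Rightarrow> real" and u :: "nat \<Rightarrow> real"
    assume "2 \<le> n \<and> 0 < pn \<and> pn \<le> 1 \<and> (\<forall>i<n. \<forall>j<n. \<xi> i j \<in> {0, 1})"
    hence n: "n > 0" by auto
    have n3: "real n ^ 3 > 0" using n by simp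
    let ?x = "xihat pn \<xi>"
    define V1 :: "nat \<times> nat \<times> nat \<Rightarrow> int \<times> int \<Rightarrow> complex" where "V1 = (\<lambda>(i,j,k) m. ee (real_of_int (fst m) * u i) * ee (real_of_int (snd m) * u j))"
    define W1 :: "nat \<times> nat \<times> nat \<Rightarrow> int \<times> int \<Rightarrow> complex" where "W1 = (\<lambda>(i,j,k) m. ee (real_of_int (fst m) * u i) * ee (real_of_int (snd m) * u k))"
    define co1 :: "nat \<times> nat \<times> nat \<Rightarrow> complex" where "co1 = (\<lambda>(i,j,k). complex_of_real (?x i j * ?x i k))"
    have S1: "0 \<le> S_ij_ik n pn \<xi>"
      "\<And>x y z. \<forall>i<n. \<bar>x i\<bar> \<le> 1 \<Longrightarrow> \<forall>i<n. \<bar>y i\<bar> \<le> 1 \<Longrightarrow> \<forall>i<n. \<bar>z i\<bar> \<le> 1 \<Longrightarrow>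
         \<bar>\<Sum>i<n. \<Sum>j<n. \<Sum>k<n. (?x i j * ?x i k) * x i * y j * z k\<bar> \<le> real n ^ 3 * S_ij_ik n pn \<xi>"
      using S_gen[OF n, where a="\<lambda>i j k. ?x i j * ?x i k"] unfolding S_ij_ik_def by auto
    have M1: "norm (\<Sum>x\<in>I n. co1 x * V1 x m * cnj (W1 x m')) \<le> 8 * (real n ^ 3 * S_ij_ik n pn \<xi>)" for m m'
    proof -
      have "(\<Sum>x\<in>I n. co1 x * V1 x m * cnj (W1 x m')) =
        (\<Sum>i<n. \<Sum>j<n. \<Sum>k<n. complex_of_real (?x i j * ?x i k) *
           (ee (real_of_int (fst m) * u i) * cnj (ee (real_of_int (fst m') * u i))) *
           ee (real_of_int (snd m) * u j) * cnj (ee (real_of_int (snd m') * u k)))"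
        unfolding I_def sum3 co1_def V1_def W1_def by (simp add: ac_simps)
      also have "norm \<dots> \<le> 8 * (real n ^ 3 * S_ij_ik n pn \<xi>)"
        by (rule complex_base) (auto simp: norm_mult intro: S1(2))
      finally show ?thesis .
    qed
    have K1: "kern \<Phi> F (u i) (u j) (u i) (u k) =
       (\<Sum>\<^sub>\<infinity>p\<in>{1..}. (\<Sum>\<^sub>\<infinity>m. \<beta> p m * V1 (i,j,k) m) * cnj (\<Sum>\<^sub>\<infinity>m. \<beta> p m * W1 (i,j,k) m))" for i j k
      unfolding kern_def dt V1_def W1_def by simp
    have c1: "c_ij_ik n pn \<xi> \<Phi> F u = (1 / of_nat n ^ 3) *
       (\<Sum>x\<in>I n. co1 x * (\<Sum>\<^sub>\<infinity>p\<in>{1..}. (\<Sum>\<^sub>\<infinity>m. \<beta> p m * V1 x m) * cnj (\<Sum>\<^sub>\<infinity>m. \<beta> p m * W1 x m)))"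
      unfolding c_ij_ik_def I_def sum3 K1 co1_def by simp
    have B1: "norm (\<Sum>x\<in>I n. co1 x * (\<Sum>\<^sub>\<infinity>p\<in>{1..}. (\<Sum>\<^sub>\<infinity>m. \<beta> p m * V1 x m) * cnj (\<Sum>\<^sub>\<infinity>m. \<beta> p m * W1 x m)))
        \<le> 8 * (real n ^ 3 * S_ij_ik n pn \<xi>) * (L\<^sup>2 * D\<^sup>2)"
      by (rule final_gen[OF fI \<beta>s Ns Nb _ _ M1]) (auto simp: V1_def W1_def norm_mult split: prod.split)
    define V2 :: "nat \<times> nat \<times> nat \<Rightarrow> int \<times> int \<Rightarrow> complex" where "V2 = (\<lambda>(i,j,k) m. ee (real_of_int (fst m) * u i) * ee (real_of_int (snd m) * u k))"
    define W2 :: "nat \<times> nat \<times> nat \<Rightarrow> int \<times> int \<Rightarrow> complex" where "W2 = (\<lambda>(i,j,k) m. ee (real_of_int (fst m) * u j) * ee (real_of_int (snd m) * u k))"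
    define co2 :: "nat \<times> nat \<times> nat \<Rightarrow> complex" where "co2 = (\<lambda>(i,j,k). complex_of_real (?x i k * ?x j k))"
    have S2: "0 \<le> S_ik_jk n pn \<xi>"
      "\<And>x y z. \<forall>i<n. \<bar>x i\<bar> \<le> 1 \<Longrightarrow> \<forall>i<n. \<bar>y i\<bar> \<le> 1 \<Longrightarrow> \<forall>i<n. \<bar>z i\<bar> \<le> 1 \<Longrightarrow>
         \<bar>\<Sum>i<n. \<Sum>j<n. \<Sum>k<n. (?x i k * ?x j k) * x i * y j * z k\<bar> \<le> real n ^ 3 * S_ik_jk n pn \<xi>"
      using S_gen[OF n, where a="\<lambda>i j k. ?x i k * ?x j k"] unfolding S_ik_jk_def by auto
    have M2: "norm (\<Sum>x\<in>I n. co2 x * V2 x m * cnj (W2 x m')) \<le> 8 * (real n ^ 3 * S_ik_jk n pn \<xi>)" for m m'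
    proof -
      have "(\<Sum>x\<in>I n. co2 x * V2 x m * cnj (W2 x m')) =
        (\<Sum>i<n. \<Sum>j<n. \<Sum>k<n. complex_of_real (?x i k * ?x j k) *
           ee (real_of_int (fst m) * u i) * cnj (ee (real_of_int (fst m') * u j)) *
           (ee (real_of_int (snd m) * u k) * cnj (ee (real_of_int (snd m') * u k))))"
        unfolding I_def sum3 co2_def V2_def W2_def by (simp add: ac_simps)
      also have "norm \<dots> \<le> 8 * (real n ^ 3 * S_ik_jk n pn \<xi>)"
        by (rule complex_base) (auto simp: norm_mult intro: S2(2))
      finally show ?thesis .
    qed
    have K2: "kern \<Phi> F (u i) (u k) (u j) (u k) =
       (\<Sum>\<^sub>\<infinity>p\<in>{1..}. (\<Sum>\<^sub>\<infinity>m. \<beta> p m * V2 (i,j,k) m) * cnj (\<Sum>\<^sub>\<infinity>m. \<beta> p m * W2 (i,j,k) m))" for i j k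
      unfolding kern_def dt V2_def W2_def by simp
    have c2: "c_ik_jk n pn \<xi> \<Phi> F u = (1 / of_nat n ^ 3) *
       (\<Sum>x\<in>I n. co2 x * (\<Sum>\<^sub>\<infinity>p\<in>{1..}. (\<Sum>\<^sub>\<infinity>m. \<beta> p m * V2 x m) * cnj (\<Sum>\<^sub>\<infinity>m. \<beta> p m * W2 x m)))"
      unfolding c_ik_jk_def I_def sum3 K2 co2_def by simp
    have B2: "norm (\<Sum>x\<in>I n. co2 x * (\<Sum>\<^sub>\<infinity>p\<in>{1..}. (\<Sum>\<^sub>\<infinity>m. \<beta> p m * V2 x m) * cnj (\<Sum>\<^sub>\<infinity>m. \<beta> p m * W2 x m)))
        \<le> 8 * (real n ^ 3 * S_ik_jk n pn \<xi>) * (L\<^sup>2 * D\<^sup>2)"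
      by (rule final_gen[OF fI \<beta>s Ns Nb _ _ M2]) (auto simp: V2_def W2_def norm_mult split: prod.split)
    have fin: "cmod ((1 / of_nat n ^ 3) * Z) \<le> C * S * L\<^sup>2"
      if Z: "norm Z \<le> 8 * (real n ^ 3 * S) * (L\<^sup>2 * D\<^sup>2)" and S0: "0 \<le> S" for Z :: complex and S
    proof -
      have "cmod ((1 / of_nat n ^ 3) * Z) = norm Z / real n ^ 3" by (simp add: norm_mult norm_divide norm_power)
      also have "\<dots> \<le> 8 * (real n ^ 3 * S) * (L\<^sup>2 * D\<^sup>2) / real n ^ 3"
        by (rule divide_right_mono[OF Z]) simp
      also have "\<dots> = (8 * D\<^sup>2) * S * L\<^sup>2" using n3 by (simp add: field_simps)
      also have "\<dots> \<le> C * S * L\<^sup>2" unfolding C_def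
        by (intro mult_right_mono S0) (auto simp: L0)
      finally show ?thesis .
    qed
    show "cmod (c_ij_ik n pn \<xi> \<Phi> F u) \<le> C * S_ij_ik n pn \<xi> * (op_norm r k F)\<^sup>2"
      unfolding c1 L_def[symmetric] by (rule fin[OF B1 S1(1)])
    show "cmod (c_ik_jk n pn \<xi> \<Phi> F u) \<le> C * S_ik_jk n pn \<xi> * (op_norm r k F)\<^sup>2"
      unfolding c2 L_def[symmetric] by (rule fin[OF B2 S2(1)])
  qed
qed


end
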